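(* Let $P_6(x,y,s)=s-(x+y+1)\big(\frac1x+\frac1y+1\big)$ and $V(P_6)=\{(x,y,s)\in(\mathbb{C}^\times)^3 : P_6(x,y,s)=0\}$. The map $(x,y,s)\mapsto s$ restricts to a fibration of the Deninger cycle $\{(x,y,s)\in V(P_6) : |x|=|y|=1,\ |s|>1\}\setminus\{(1,1,9)\}$ above the interval $(1,9)$. *)

theory Defs
  imports "HOL-Analysis.Analysis"
begin

definition P6 :: "complex \<Rightarrow> complex \<Rightarrow> complex \<Rightarrow> complex" where
  "P6 x y s = s - (x + y + 1) * (1 / x + 1 / y + 1)"

definition V_P6 :: "(complex \<times> complex \<times> complex) set" where
  "V_P6 = {(x, y, s). x \<noteq> 0 \<and> y \<noteq> 0 \<and> s \<noteq> 0 \<and> P6 x y s = 0}"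

definition deninger_cycle :: "(complex \<times> complex \<times> complex) set" where
  "deninger_cycle =
     {(x, y, s) \<in> V_P6. cmod x = 1 \<and> cmod y = 1 \<and> cmod s > 1} - {(1, 1, 9)}"

definition fibration_over ::
  "('a::topological_space \<Rightarrow> 'b::topological_space) \<Rightarrow> 'a set \<Rightarrow> 'b set \<Rightarrow> bool" where
  "fibration_over p E B \<longleftrightarrow>
     p ` E = B \<and> continuous_on E p \<and>
     (\<forall>b\<in>B. \<exists>U (F :: 'a set) h k.
        openin (top_of_set B) U \<and> b \<in> U \<and>
        homeomorphism (E \<inter> p -` U) (U \<times> F) h k \<and>
        (\<forall>z\<in>E \<inter> p -` U. fst (h z) = p z))"

end

theory Submission
  imports Defs
begin

definition frr :: "real \<Rightarrow> real \<Rightarrow> real" where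
  "frr a b = 3 + 2 * cos a + 2 * cos b + 2 * cos (a - b)"

lemma frr_prod_aux: "1 + cos (2*p) + cos (2*q) + cos (2*p - 2*q) = 4 * cos p * cos q * cos (p - (q::real))"
proof -
  have "2*p - 2*q = 2*(p-q)" by simp
  then have e1: "cos (2*p - 2*q) = 2 * (cos (p-q))^2 - 1" by (simp only: cos_double_cos)
  have e2': "cos ((p+q)+(p-q)) + cos ((p+q)-(p-q)) = 2 * cos (p+q) * cos (p-q)"
    by (simp only: cos_add cos_diff)
  have e2: "cos (2*p) + cos (2*q) = 2 * cos (p+q) * cos (p-q)"
    using e2' by (simp add: algebra_simps)
  have e3: "cos (p+q) + cos (p-q) = 2 * cos p * cos q" by (simp add: cos_add cos_diff)
  have "1 + cos (2*p) + cos (2*q) + cos (2*p - 2*q) = 2 * cos (p-q) * (cos (p+q) + cos (p-q))"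
    using e1 e2 by (simp add: power2_eq_square algebra_simps)
  also have "\<dots> = 4 * cos p * cos q * cos (p - q)" using e3 by simp
  finally show ?thesis .
qed

lemma frr_prod: "frr a b - 1 = 8 * cos (a/2) * cos (b/2) * cos ((a - b)/2)"
  using frr_prod_aux[of "a/2" "b/2"] unfolding frr_def by (simp add: diff_divide_distrib)

lemma csin_pos: assumes "0 < t" "t * \<bar>c\<bar> < pi" shows "c * sin (t*c) \<ge> 0" "c \<noteq> 0 \<Longrightarrow> c * sin (t*c) > 0"
proof -
  have "c \<noteq> 0 \<Longrightarrow> c * sin (t*c) > 0"
  proof -
    assume c: "c \<noteq> 0"
    show ?thesis
    proof (cases "c > 0")
      case True
      then have "sin (t*c) > 0" using assms by (intro sin_gt_zero) auto
      then show ?thesis using True by simp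
    next
      case False
      then have cn: "c < 0" using c by simp
      then have "sin (t*(-c)) > 0" using assms by (intro sin_gt_zero) (auto simp: mult_pos_neg)
      then have "sin (t*c) < 0" by simp
      then show ?thesis using cn by (simp add: mult_neg_neg)
    qed
  qed
  then show "c \<noteq> 0 \<Longrightarrow> c * sin (t*c) > 0" "c * sin (t*c) \<ge> 0" by (cases "c = 0", auto)+
qed

lemma lt_aux: assumes "0 < t" "t < t2" "t2 * \<bar>c\<bar> \<le> pi" shows "t * \<bar>c::real\<bar> < pi"
proof (cases "c = 0")
  case False
  then have "t * \<bar>c\<bar> < t2 * \<bar>c\<bar>" using assms by (intro mult_strict_right_mono) auto
  then show ?thesis using assms by linarith
qed (use pi_gt_zero in simp)

lemma frr_decr:
  assumes nz: "a \<noteq> 0 \<or> b \<noteq> 0" and t: "0 \<le> t1" "t1 < t2"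
    and b1: "t2*\<bar>a\<bar> \<le> pi" "t2*\<bar>b\<bar> \<le> pi" "t2*\<bar>a-b\<bar> \<le> pi"
  shows "frr (t2*a) (t2*b) < frr (t1*a) (t1*b)"
proof -
  let ?f = "\<lambda>t. frr (t*a) (t*b)"
  have "?f t2 < ?f t1"
  proof (rule DERIV_neg_imp_decreasing_open[OF t(2)])
    show "continuous_on {t1..t2} ?f" unfolding frr_def by (intro continuous_intros)
    fix t assume tt: "t1 < t" "t < t2"
    have tp: "0 < t" using tt t by simp
    have l: "t*\<bar>a\<bar> < pi" "t*\<bar>b\<bar> < pi" "t*\<bar>a-b\<bar> < pi"
      using lt_aux[OF tp tt(2) b1(1)] lt_aux[OF tp tt(2) b1(2)] lt_aux[OF tp tt(2) b1(3)] by auto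
    have "(?f has_real_derivative
        (-2 * (a * sin (t*a) + b * sin (t*b) + (a-b) * sin (t*(a-b))))) (at t)"
      unfolding frr_def by (auto intro!: derivative_eq_intros simp: algebra_simps)
    moreover have "a * sin (t*a) + b * sin (t*b) + (a-b) * sin (t*(a-b)) > 0"
      using csin_pos[OF tp l(1)] csin_pos[OF tp l(2)] csin_pos[OF tp l(3)] nz by force
    ultimately show "\<exists>y. (?f has_real_derivative y) (at t) \<and> y < 0" by force
  qed
  then show ?thesis .
qed

definition fr :: "complex \<Rightarrow> real" where "fr w = frr (Re w) (Im w)"

definition G :: "complex set" where
  "G = {w. w \<noteq> 0 \<and> \<bar>Re w\<bar> < pi \<and> \<bar>Im w\<bar> < pi \<and> \<bar>Re w - Im w\<bar> < pi}"

definition Psi :: "complex \<Rightarrow> complex" where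
  "Psi w = complex_of_real ((9 - fr w) / cmod w) * w"

lemma cont_fr: "continuous_on S fr"
  unfolding fr_def frr_def by (intro continuous_intros)

lemma open_G: "open G"
proof -
  have eq: "G = (- {0}) \<inter> {w. \<bar>Re w\<bar> < pi} \<inter> {w. \<bar>Im w\<bar> < pi} \<inter> {w. \<bar>Re w - Im w\<bar> < pi}"
    unfolding G_def by auto
  have c: "continuous_on UNIV (\<lambda>w::complex. \<bar>Re w\<bar>)" "continuous_on UNIV (\<lambda>w::complex. \<bar>Im w\<bar>)"
    "continuous_on UNIV (\<lambda>w::complex. \<bar>Re w - Im w\<bar>)" "continuous_on UNIV (\<lambda>w::complex. pi)"
    by (intro continuous_intros)+
  have o: "open {w::complex. \<bar>Re w\<bar> < pi}" "open {w::complex. \<bar>Im w\<bar> < pi}"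
    "open {w::complex. \<bar>Re w - Im w\<bar> < pi}" "open (- {0::complex})"
    by (rule open_Collect_less[OF c(1) c(4)], rule open_Collect_less[OF c(2) c(4)],
        rule open_Collect_less[OF c(3) c(4)], rule open_Compl, rule closed_singleton)
  show ?thesis unfolding eq by (intro open_Int o)
qed

lemma cos_half_pos: assumes "\<bar>a\<bar> < pi" shows "cos (a/2) > 0"
proof -
  have "-pi < a" "a < pi" using assms by linarith+
  then show ?thesis by (intro cos_gt_zero_pi) linarith+
qed

lemma fr_gt1: assumes "w \<in> G" shows "fr w > 1"
proof -
  have "8 * cos (Re w/2) * cos (Im w/2) * cos ((Re w - Im w)/2) > 0"
    using assms cos_half_pos[of "Re w"] cos_half_pos[of "Im w"] cos_half_pos[of "Re w - Im w"]
    unfolding G_def by (intro mult_pos_pos) auto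
  then show ?thesis using frr_prod[of "Re w" "Im w"] unfolding fr_def by linarith
qed

lemma fr_lt9: assumes "w \<in> G" shows "fr w < 9"
proof -
  have "w \<noteq> 0" using assms by (simp add: G_def)
  then have "Re w \<noteq> 0 \<or> Im w \<noteq> 0" using complex_eq_iff by auto
  from frr_decr[OF this, of 0 1] assms show ?thesis
    unfolding G_def fr_def by (simp add: frr_def)
qed

lemma Psi_alt: "Psi w = complex_of_real (9 - fr w) * (w / complex_of_real (cmod w))"
  unfolding Psi_def of_real_divide by (simp add: divide_inverse mult.assoc mult.commute)

lemma norm_Psi: assumes "w \<in> G" shows "cmod (Psi w) = 9 - fr w"
proof -
  have "cmod w > 0" using assms by (auto simp: G_def)
  moreover have "9 - fr w > 0" using fr_lt9[OF assms] by simp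
  ultimately show ?thesis unfolding Psi_def norm_mult norm_of_real by simp
qed

lemma Psi_inj: "inj_on Psi G"
proof -
  have *: False if w: "w1 \<in> G" "w2 \<in> G" "Psi w1 = Psi w2" "cmod w1 < cmod w2" for w1 w2
  proof -
    have nz: "w1 \<noteq> 0" "w2 \<noteq> 0" using w by (auto simp: G_def)
    have ff: "fr w1 = fr w2" using norm_Psi[OF w(1)] norm_Psi[OF w(2)] w(3) by simp
    have p9: "9 - fr w1 > 0" using fr_lt9[OF w(1)] by simp
    define u where "u = w2 / cmod w2"
    have "complex_of_real ((9 - fr w1)) * (w1 / cmod w1) = complex_of_real ((9 - fr w1)) * u"
      using w(3) ff Psi_alt[of w1] Psi_alt[of w2] unfolding u_def by simp
    then have wu: "w1 / cmod w1 = u" using p9 by (metis mult_left_cancel of_real_eq_0_iff less_irrefl)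
    have e1: "w1 = complex_of_real (cmod w1) * u" using wu nz by (simp add: field_simps)
    have e2: "w2 = complex_of_real (cmod w2) * u" using nz by (simp add: u_def field_simps)
    have unz: "Re u \<noteq> 0 \<or> Im u \<noteq> 0" using nz e2 complex_eq_iff by (metis mult_zero_right zero_complex.sel)
    have r1: "Re w1 = cmod w1 * Re u" "Im w1 = cmod w1 * Im u" by (subst e1, simp)+
    have r2: "Re w2 = cmod w2 * Re u" "Im w2 = cmod w2 * Im u" by (subst e2, simp)+
    have b: "cmod w2 * \<bar>Re u\<bar> \<le> pi" "cmod w2 * \<bar>Im u\<bar> \<le> pi" "cmod w2 * \<bar>Re u - Im u\<bar> \<le> pi"
      using w(2) r2 unfolding G_def by (auto simp: abs_mult simp flip: right_diff_distrib)
    have "frr (cmod w2 * Re u) (cmod w2 * Im u) < frr (cmod w1 * Re u) (cmod w1 * Im u)"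
      by (rule frr_decr[OF unz _ w(4) b]) simp
    then show False using ff r1 r2 unfolding fr_def by simp
  qed
  show ?thesis
  proof (rule inj_onI)
    fix w1 w2 assume ww: "w1 \<in> G" "w2 \<in> G" "Psi w1 = Psi w2"
    have cm: "cmod w1 = cmod w2"
    proof (rule ccontr)
      assume "cmod w1 \<noteq> cmod w2"
      then have "cmod w1 < cmod w2 \<or> cmod w2 < cmod w1" by linarith
      then show False using *[OF ww] *[OF ww(2) ww(1) ww(3)[symmetric]] by blast
    qed
    have ff: "fr w1 = fr w2" using norm_Psi[OF ww(1)] norm_Psi[OF ww(2)] ww(3) by simp
    define k where "k = (9 - fr w1) / cmod w1"
    have kz: "k \<noteq> 0" using fr_lt9[OF ww(1)] ww(1) by (auto simp: k_def G_def)
    have "complex_of_real k * w1 = complex_of_real k * w2"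
      using ww(3) unfolding Psi_def k_def cm ff .
    then show "w1 = w2" using kz by simp
  qed
qed

definition Ann :: "complex set" where "Ann = {v. 0 < cmod v \<and> cmod v < 8}"

lemma Psi_image: "Psi ` G = Ann"
proof
  show "Psi ` G \<subseteq> Ann"
    using norm_Psi fr_gt1 fr_lt9 by (force simp: Ann_def)
next
  show "Ann \<subseteq> Psi ` G"
  proof
    fix v assume v: "v \<in> Ann"
    then have vnz: "v \<noteq> 0" and vb: "0 < cmod v" "cmod v < 8" by (auto simp: Ann_def)
    define u where "u = v / cmod v"
    define a where "a = Re u"
    define b where "b = Im u"
    have unz: "u \<noteq> 0" using vnz by (simp add: u_def)
    have ab: "a \<noteq> 0 \<or> b \<noteq> 0" using unz complex_eq_iff unfolding a_def b_def by auto
    define M where "M = max \<bar>a\<bar> (max \<bar>b\<bar> \<bar>a-b\<bar>)"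
    have Mp: "M > 0" using ab by (auto simp: M_def)
    define T where "T = pi / M"
    have Tp: "T > 0" using Mp by (simp add: T_def)
    have TM: "T * M = pi" using Mp by (simp add: T_def)
    have Tb: "T * \<bar>a\<bar> \<le> pi" "T * \<bar>b\<bar> \<le> pi" "T * \<bar>a-b\<bar> \<le> pi"
    proof -
      have m: "\<bar>a\<bar> \<le> M" "\<bar>b\<bar> \<le> M" "\<bar>a-b\<bar> \<le> M" by (auto simp: M_def)
      show "T * \<bar>a\<bar> \<le> pi" using mult_left_mono[OF m(1), of T] Tp TM by simp
      show "T * \<bar>b\<bar> \<le> pi" using mult_left_mono[OF m(2), of T] Tp TM by simp
      show "T * \<bar>a-b\<bar> \<le> pi" using mult_left_mono[OF m(3), of T] Tp TM by simp
    qed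
    define g where "g t = frr (t*a) (t*b)" for t
    have g0: "g 0 = 9" by (simp add: g_def frr_def)
    have cz: "cos (c/2) = 0" if "\<bar>c\<bar> = pi" for c :: real
    proof (cases "c \<ge> 0")
      case True then show ?thesis using that by simp
    next
      case False then have "c = - pi" using that by simp
      then show ?thesis by simp
    qed
    have gT: "g T = 1"
    proof -
      have "M = \<bar>a\<bar> \<or> M = \<bar>b\<bar> \<or> M = \<bar>a-b\<bar>" unfolding M_def max_def by auto
      moreover have "\<bar>T*c\<bar> = T * \<bar>c\<bar>" for c using Tp by (simp add: abs_mult)
      ultimately have "\<bar>T*a\<bar> = pi \<or> \<bar>T*b\<bar> = pi \<or> \<bar>T*(a - b)\<bar> = pi"
        using TM by auto
      then have "\<bar>T*a\<bar> = pi \<or> \<bar>T*b\<bar> = pi \<or> \<bar>T*a - T*b\<bar> = pi"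
        by (simp add: right_diff_distrib)
      then show ?thesis using frr_prod[of "T*a" "T*b"] cz[of "T*a"] cz[of "T*b"] cz[of "T*a-T*b"]
        by (auto simp: g_def)
    qed
    have "\<exists>t. 0 \<le> t \<and> t \<le> T \<and> g t = 9 - cmod v"
      by (rule IVT2) (use gT g0 vb Tp in \<open>auto simp: g_def frr_def intro!: continuous_intros\<close>)
    then obtain t where t: "0 \<le> t" "t \<le> T" "g t = 9 - cmod v" by blast
    have t0: "t \<noteq> 0" using t g0 vb by auto
    have tT: "t \<noteq> T" using t gT vb by auto
    have tp: "t > 0" "t < T" using t t0 tT by auto
    define w where "w = complex_of_real t * u"
    have nu: "cmod u = 1" using vnz by (simp add: u_def norm_divide)
    have nw: "cmod w = t" using tp nu by (simp add: w_def norm_mult)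
    have rw: "Re w = t * a" "Im w = t * b" by (simp_all add: w_def a_def b_def)
    have wG: "w \<in> G"
      using lt_aux[OF tp(1) tp(2) Tb(1)] lt_aux[OF tp(1) tp(2) Tb(2)] lt_aux[OF tp(1) tp(2) Tb(3)]
        nw tp unfolding G_def by (auto simp: rw abs_mult simp flip: right_diff_distrib)
    have "fr w = 9 - cmod v" using t(3) by (simp add: fr_def g_def rw)
    then have "Psi w = v"
      unfolding Psi_def using nw tp vnz by (simp add: w_def u_def)
    then show "v \<in> Psi ` G" using wG by blast
  qed
qed

definition beta :: "complex \<Rightarrow> complex \<times> complex \<times> complex" where
  "beta w = (cis (Re w), cis (Im w), complex_of_real (fr w))"

definition alpha :: "complex \<times> complex \<times> complex \<Rightarrow> complex" where
  "alpha z = complex_of_real (Arg (fst z)) + \<i> * complex_of_real (Arg (fst (snd z)))"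

lemma re_alpha [simp]: "Re (alpha z) = Arg (fst z)" and im_alpha [simp]: "Im (alpha z) = Arg (fst (snd z))"
  by (simp_all add: alpha_def)

lemma frr_sq: "frr a b = (cos a + cos b + 1)^2 + (sin a + sin b)^2"
proof -
  have s1: "sin a * sin a + cos a * cos a = 1" by (metis sin_cos_squared_add power2_eq_square)
  have s2: "sin b * sin b + cos b * cos b = 1" by (metis sin_cos_squared_add power2_eq_square)
  show ?thesis unfolding frr_def cos_diff power2_eq_square using s1 s2 by algebra
qed

lemma P6_cis: "P6 (cis a) (cis b) s = s - complex_of_real (frr a b)"
proof -
  let ?z = "cis a + cis b + 1"
  have i: "1 / cis c = cnj (cis c)" for c
    by (simp add: divide_inverse cis_inverse complex_eq_iff)
  have "(cis a + cis b + 1) * (1 / cis a + 1 / cis b + 1) = ?z * cnj ?z" by (simp add: i)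
  also have "\<dots> = complex_of_real ((Re ?z)^2 + (Im ?z)^2)" by (rule complex_mult_cnj)
  also have "(Re ?z)^2 + (Im ?z)^2 = frr a b" by (simp add: frr_sq)
  finally show ?thesis unfolding P6_def by simp
qed

lemma cos_nonpos_aux: assumes "pi/2 \<le> \<bar>x\<bar>" "\<bar>x\<bar> \<le> pi" shows "cos x \<le> 0"
proof -
  have "cos \<bar>x\<bar> = - sin (\<bar>x\<bar> - pi/2)" by (simp add: sin_diff)
  moreover have "sin (\<bar>x\<bar> - pi/2) \<ge> 0" using assms by (intro sin_ge_zero) auto
  moreover have "cos \<bar>x\<bar> = cos x" by (cases "x \<ge> 0") auto
  ultimately show ?thesis by simp
qed

lemma beta_in: assumes "w \<in> G" shows "beta w \<in> deninger_cycle"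
proof -
  have "fr w > 1" "fr w < 9" using fr_gt1 fr_lt9 assms by auto
  moreover have "complex_of_real (fr w) \<noteq> 9"
    using \<open>fr w < 9\<close> by (metis of_real_numeral of_real_eq_iff less_irrefl)
  ultimately show ?thesis
    unfolding deninger_cycle_def V_P6_def beta_def using P6_cis[of "Re w" "Im w"]
    by (auto simp: fr_def)
qed

lemma alpha_beta: assumes "w \<in> G" shows "alpha (beta w) = w"
proof -
  have "-pi < Re w" "Re w \<le> pi" "-pi < Im w" "Im w \<le> pi" using assms by (auto simp: G_def)
  then show ?thesis by (simp add: complex_eq_iff beta_def Arg_cis)
qed

lemma cycle_alpha: assumes "z \<in> deninger_cycle" shows "alpha z \<in> G" "beta (alpha z) = z"
proof -
  obtain x y s where z: "z = (x, y, s)" by (cases z) auto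
  have m: "cmod x = 1" "cmod y = 1" "cmod s > 1" "P6 x y s = 0" "(x,y,s) \<noteq> (1,1,9)"
    using assms z by (auto simp: deninger_cycle_def V_P6_def)
  have nz: "x \<noteq> 0" "y \<noteq> 0" using m by auto
  have cx: "cis (Arg x) = x" "cis (Arg y) = y" using cis_Arg nz m by (auto simp: sgn_div_norm)
  define a where "a = Arg x"
  define b where "b = Arg y"
  have s: "s = complex_of_real (frr a b)" using P6_cis[of a b s] m(4) cx by (simp add: a_def b_def)
  have f0: "frr a b \<ge> 0" by (simp add: frr_sq)
  have f1: "frr a b > 1" using m(3) s f0 by simp
  have ab: "-pi < a" "a \<le> pi" "-pi < b" "b \<le> pi" using Arg_bounded a_def b_def by auto
  have ca: "\<bar>a\<bar> < pi"
  proof (rule ccontr)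
    assume "\<not> \<bar>a\<bar> < pi" then have "a = pi" using ab by auto
    then show False using f1 frr_prod[of a b] by simp
  qed
  have cb: "\<bar>b\<bar> < pi"
  proof (rule ccontr)
    assume "\<not> \<bar>b\<bar> < pi" then have "b = pi" using ab by auto
    then show False using f1 frr_prod[of a b] by simp
  qed
  have "cos ((a-b)/2) > 0"
  proof -
    have p: "8 * cos (a/2) * cos (b/2) > 0"
      using cos_half_pos[OF ca] cos_half_pos[OF cb] by simp
    have "(8 * cos (a/2) * cos (b/2)) * cos ((a-b)/2) > 0" using f1 frr_prod[of a b] by simp
    then show ?thesis using zero_less_mult_pos[OF _ p] by blast
  qed
  moreover have "\<bar>(a-b)/2\<bar> \<le> pi" using ca cb by auto
  ultimately have cab: "\<bar>a - b\<bar> < pi" using cos_nonpos_aux[of "(a-b)/2"] by force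
  have "alpha z \<noteq> 0"
  proof
    assume "alpha z = 0"
    then have "a = 0" "b = 0" using z by (auto simp: a_def b_def complex_eq_iff)
    then show False using m(5) cx s by (simp add: a_def b_def frr_def)
  qed
  then show "alpha z \<in> G" using ca cb cab z by (simp add: G_def a_def b_def)
  show "beta (alpha z) = z" using z cx s by (simp add: beta_def fr_def a_def b_def)
qed

lemma cycle_eq: "deninger_cycle = beta ` G"
  using beta_in cycle_alpha by force

lemma cont_alpha: "continuous_on deninger_cycle alpha"
proof -
  have nn: "fst z \<notin> \<real>\<^sub>\<le>\<^sub>0 \<and> fst (snd z) \<notin> \<real>\<^sub>\<le>\<^sub>0" if "z \<in> deninger_cycle" for z
  proof -
    have "alpha z \<in> G" using cycle_alpha that by blast
    then have "Arg (fst z) \<noteq> pi" "Arg (fst (snd z)) \<noteq> pi" by (auto simp: G_def)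
    moreover have "fst z \<noteq> 0" "fst (snd z) \<noteq> 0" using that
      by (auto simp: deninger_cycle_def V_P6_def)
    ultimately show ?thesis
      by (auto simp: complex_nonpos_Reals_iff Arg_eq_pi complex_eq_iff)
  qed
  show ?thesis unfolding alpha_def
    by (intro continuous_intros) (use nn in auto)
qed

lemma cont_beta: "continuous_on S beta"
  unfolding beta_def by (intro continuous_intros cont_fr)

lemma homeo1: "homeomorphism deninger_cycle G alpha beta"
  unfolding homeomorphism_def
  using cycle_alpha alpha_beta cont_alpha cont_beta cycle_eq beta_in by (auto simp: image_iff) (metis alpha_beta beta_in)

lemma cont_Psi: "continuous_on G Psi"
proof -
  have "\<forall>w\<in>G. cmod w \<noteq> 0" by (auto simp: G_def)
  then show ?thesis unfolding Psi_def by (intro continuous_intros cont_fr) auto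
qed

lemma homeo2: obtains psiinv where "homeomorphism G Ann Psi psiinv"
  using invariance_of_domain_homeomorphism[OF open_G cont_Psi _ Psi_inj] Psi_image by auto

lemma cmod_9: "cmod (9 - complex_of_real r) = \<bar>9 - r\<bar>"
proof -
  have "9 - complex_of_real r = complex_of_real (9 - r)" by simp
  then show ?thesis by (simp only: norm_of_real)
qed

definition Fb :: "(complex \<times> complex \<times> complex) set" where
  "Fb = {(u, 0, 0) | u. cmod u = 1}"

definition gam :: "complex \<Rightarrow> complex \<times> (complex \<times> complex \<times> complex)" where
  "gam v = (complex_of_real (9 - cmod v), (v / complex_of_real (cmod v), 0, 0))"

definition del :: "complex \<times> (complex \<times> complex \<times> complex) \<Rightarrow> complex" where
  "del q = complex_of_real (9 - Re (fst q)) * fst (snd q)"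

lemma homeo3: "homeomorphism Ann (complex_of_real ` {1<..<9} \<times> Fb) gam del"
proof -
  have A: "del (gam v) = v" if "v \<in> Ann" for v
    using that by (auto simp: Ann_def gam_def del_def)
  have B: "gam v \<in> complex_of_real ` {1<..<9} \<times> Fb" if "v \<in> Ann" for v
  proof -
    have "9 - cmod v \<in> {1<..<9}" using that by (auto simp: Ann_def)
    then have "complex_of_real (9 - cmod v) \<in> complex_of_real ` {1<..<9}" by (rule imageI)
    moreover have "(v / complex_of_real (cmod v), 0, 0) \<in> Fb"
      using that by (auto simp: Ann_def Fb_def norm_divide)
    ultimately show ?thesis unfolding gam_def by (simp only: mem_Times_iff fst_conv snd_conv)
  qed
  have C: "del q \<in> Ann \<and> gam (del q) = q" if "q \<in> complex_of_real ` {1<..<9} \<times> Fb" for q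
  proof -
    have q1: "fst q \<in> complex_of_real ` {1<..<9}" "snd q \<in> Fb" using that by (auto simp: mem_Times_iff)
    obtain r where r: "fst q = complex_of_real r" "1 < r" "r < 9" using q1(1) by auto
    obtain u where u: "snd q = (u, 0, 0)" "cmod u = 1" using q1(2) by (auto simp: Fb_def)
    have q: "q = (complex_of_real r, (u, 0, 0))" "1 < r" "r < 9" "cmod u = 1"
      using r u by (metis prod.collapse)+
    have n: "cmod (del q) = 9 - r" using q by (simp add: del_def norm_mult cmod_9)
    have d: "del q = complex_of_real (9 - r) * u" using q by (simp add: del_def)
    have "del q \<in> Ann" unfolding Ann_def mem_Collect_eq using n q by linarith
    moreover have "gam (del q) = q"
    proof -
      have "complex_of_real r \<noteq> 9" using q(3) by (metis of_real_numeral of_real_eq_iff less_irrefl)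
      then show ?thesis unfolding gam_def n unfolding d using q by simp
    qed
    ultimately show ?thesis by blast
  qed
  have "continuous_on Ann gam"
  proof -
    have "\<forall>v\<in>Ann. cmod v \<noteq> 0" by (auto simp: Ann_def)
    then show ?thesis unfolding gam_def by (intro continuous_intros) auto
  qed
  moreover have "continuous_on S del" for S unfolding del_def by (intro continuous_intros)
  moreover have "gam ` Ann = complex_of_real ` {1<..<9} \<times> Fb"
  proof
    show "gam ` Ann \<subseteq> complex_of_real ` {1<..<9} \<times> Fb" using B by blast
    show "complex_of_real ` {1<..<9} \<times> Fb \<subseteq> gam ` Ann"
    proof
      fix q assume "q \<in> complex_of_real ` {1<..<9} \<times> Fb"
      then have "del q \<in> Ann" "gam (del q) = q" using C by auto
      then show "q \<in> gam ` Ann" by (metis imageI)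
    qed
  qed
  moreover have "del ` (complex_of_real ` {1<..<9} \<times> Fb) = Ann"
  proof
    show "del ` (complex_of_real ` {1<..<9} \<times> Fb) \<subseteq> Ann" using C by blast
    show "Ann \<subseteq> del ` (complex_of_real ` {1<..<9} \<times> Fb)"
    proof
      fix v assume "v \<in> Ann"
      then have "gam v \<in> complex_of_real ` {1<..<9} \<times> Fb" "del (gam v) = v" using A B by auto
      then show "v \<in> del ` (complex_of_real ` {1<..<9} \<times> Fb)" by (metis imageI)
    qed
  qed
  ultimately show ?thesis unfolding homeomorphism_def using A C by blast
qed

theorem lemma9p6:
  shows "fibration_over (\<lambda>(x, y, s). s) deninger_cycle (complex_of_real ` {1<..<9})"
proof -
  let ?p = "\<lambda>(x::complex, y::complex, s::complex). s"
  let ?B = "complex_of_real ` {1<..<9}"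
  obtain psiinv where h2: "homeomorphism G Ann Psi psiinv" using homeo2 by blast
  have pb: "?p (beta w) = complex_of_real (fr w)" for w by (simp add: beta_def)
  have img: "?p ` deninger_cycle = ?B"
  proof
    show "?p ` deninger_cycle \<subseteq> ?B"
    proof
      fix c assume "c \<in> ?p ` deninger_cycle"
      then obtain w where w: "w \<in> G" "c = ?p (beta w)" unfolding cycle_eq by blast
      then have "fr w \<in> {1<..<9}" using fr_gt1 fr_lt9 by auto
      then show "c \<in> ?B" using w pb by (metis imageI)
    qed
  next
    show "?B \<subseteq> ?p ` deninger_cycle"
    proof
      fix c assume "c \<in> ?B"
      then obtain r where r: "c = complex_of_real r" "1 < r" "r < 9" by auto
      have "cmod (complex_of_real (9 - r)) = 9 - r" using r unfolding norm_of_real by simp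
      then have "complex_of_real (9 - r) \<in> Ann" using r unfolding Ann_def mem_Collect_eq by linarith
      then obtain w where w: "w \<in> G" "Psi w = complex_of_real (9 - r)"
        using Psi_image by (metis imageE)
      then have "fr w = r" using norm_Psi[OF w(1)] r by (simp add: cmod_9)
      then show "c \<in> ?p ` deninger_cycle" using w r pb unfolding cycle_eq by (metis imageI)
    qed
  qed
  have cp: "continuous_on deninger_cycle ?p"
  proof -
    have "?p = (\<lambda>z. snd (snd z))" by auto
    then show ?thesis by (simp add: continuous_intros)
  qed
  have hh: "homeomorphism deninger_cycle (?B \<times> Fb) (gam \<circ> (Psi \<circ> alpha)) ((beta \<circ> psiinv) \<circ> del)"
    by (rule homeomorphism_compose[OF homeomorphism_compose[OF homeo1 h2] homeo3])
  have fh: "fst ((gam \<circ> (Psi \<circ> alpha)) z) = ?p z" if "z \<in> deninger_cycle" for z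
  proof -
    have "alpha z \<in> G" "beta (alpha z) = z" using cycle_alpha that by auto
    then show ?thesis using norm_Psi[of "alpha z"] pb[of "alpha z"] by (simp add: gam_def)
  qed
  have "deninger_cycle \<inter> ?p -` ?B = deninger_cycle" using img by blast
  then show ?thesis unfolding fibration_over_def
    using img cp hh fh by (intro conjI ballI exI[of _ ?B] exI[of _ Fb]) (auto simp del: split_paired_all)
qed

end
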